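(* Consider the constant-resource type system, and assume the program is well-typed w.r.t. the signature $\Sigma$ in that system. Let $X\subseteq\mathrm{dom}(\Gamma)$. Suppose $\models E:\Gamma$, $E\vdash e\Downarrow v$, $\Sigma;\Gamma\vdash^{q}_{q'}e:A$ is derivable in the constant-resource type system, $\curlyvee(A\mid A,A)$ holds, and $\curlyvee(\Gamma(x)\mid\Gamma(x),\Gamma(x))$ holds for every $x\in\mathrm{dom}(\Gamma)\setminus X$. Then $e$ is constant resource w.r.t. $X$, i.e. $\mathrm{const}_X(e)$ holds (with respect to the base context $|\Gamma|$).
   Context: Base types: $T ::= \mathsf{unit}\mid\mathsf{bool}\mid\mathsf{int}\mid L(T)\mid T*T$. Values: $v ::= () \mid \mathsf{true}\mid\mathsf{false}\mid n\ (n\in\mathbb Z)\mid [v_1,\dots,v_n]\ (n\ge 0$, the empty list being $\mathsf{nil})\mid (v_1,v_2)$. Value typing $\models v:T$: $()$ has type $\mathsf{unit}$, booleans have type $\mathsf{bool}$, integers have type $\mathsf{int}$, $(v_1,v_2):T_1*T_2$ if $\models v_i:T_i$, and $[v_1,\dots,v_n]:L(T)$ if every $\models v_i:T$ (so $\mathsf{nil}$ has every list type). Expressions (let-normal form; $x,x_i$ are variables, $f$ function identifiers): $e ::= () \mid \mathsf{true}\mid \mathsf{false}\mid n\mid x\mid \mathrm{op}_\diamond(x_1,x_2)\mid \mathrm{app}(f,x)\mid \mathrm{if}(x,e_t,e_f)\mid \mathrm{let}(x,e_1,x.e_2)\mid \mathrm{pair}(x_1,x_2)\mid \mathrm{match}(x,(x_1,x_2).e)\mid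 \mathsf{nil}\mid \mathrm{cons}(x_1,x_2)\mid\mathrm{match}(x,e_1,(x_h,x_t).e_2)\mid\mathrm{share}(x,(x_1,x_2).e)$, with $\diamond\in\{+,-,*,\mathrm{div},\mathrm{mod},=,<>,<,>,\mathrm{and},\mathrm{or}\}$. A program fixes for each function identifier $f$ a body $e_f$ with a single parameter variable $y^f$. An environment $E$ is a finite map from variables to values. Cost semantics: fix arbitrary rational constants $K^{\mathrm{unit}},K^{\mathrm{bool}},K^{\mathrm{int}},K^{\mathrm{nil}},K^{\mathrm{var}},K^{\mathrm{op}},K^{\mathrm{app}},K^{\mathrm{let}},K^{\mathrm{cond}},K^{\mathrm{pair}},K^{\mathrm{matchP}},K^{\mathrm{cons}},K^{\mathrm{matchN}},K^{\mathrm{matchL}}$. The judgement $E\vdash^{q}_{q'} e\Downarrow v$ (all counters $q,q'$ occurring in derivations are in $\mathbb Q_{\ge0}$) is defined inductively: $E\vdash^{q+K^{c}}_{q}c\Downarrow c$ for constants $c\in\{(),\mathsf{true},\mathsf{false},n,\mathsf{nil}\}$ with the corresponding constant $K^{\mathrm{unit}},K^{\mathrm{bool}},K^{\mathrm{int}},K^{\mathrm{nil}}$; $E\vdash^{q+K^{\mathrm{var}}}_q x\Downarrow E(x)$ for $x\in\mathrm{dom}(E)$; $E\vdash^{q+K^{\mathrm{op}}}_q\mathrm{op}_\diamond(x_1,x_2)\Downarrow E(x_1)\diamond E(x_2)$; $E\vdash^{q+K^{\mathrm{pair}}}_q \mathrm{pair}(x_1,x_2)\Downarrow (E(x_1),E(x_2))$;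 $E\vdash^{q+K^{\mathrm{cons}}}_q\mathrm{cons}(x_h,x_t)\Downarrow[v_1,\dots,v_n]$ if $E(x_h)=v_1$ and $E(x_t)=[v_2,\dots,v_n]$; if $E[y^f\mapsto E(x)]\vdash^q_{q'}e_f\Downarrow v$ then $E\vdash^{q+K^{\mathrm{app}}}_{q'}\mathrm{app}(f,x)\Downarrow v$; if $E\vdash^{q-K^{\mathrm{let}}}_{q_1}e_1\Downarrow v_1$ and $E[x\mapsto v_1]\vdash^{q_1}_{q'}e_2\Downarrow v$ then $E\vdash^q_{q'}\mathrm{let}(x,e_1,x.e_2)\Downarrow v$; if $E(x)=\mathsf{true}$ and $E\vdash^{q-K^{\mathrm{cond}}}_{q'}e_t\Downarrow v$ (resp. $E(x)=\mathsf{false}$ and $E\vdash^{q-K^{\mathrm{cond}}}_{q'}e_f\Downarrow v$) then $E\vdash^q_{q'}\mathrm{if}(x,e_t,e_f)\Downarrow v$; if $E(x)=(v_1,v_2)$ and $E[x_1\mapsto v_1,x_2\mapsto v_2]\vdash^{q-K^{\mathrm{matchP}}}_{q'}e\Downarrow v$ then $E\vdash^q_{q'}\mathrm{match}(x,(x_1,x_2).e)\Downarrow v$; if $E(x)=\mathsf{nil}$ and $E\vdash^{q-K^{\mathrm{matchN}}}_{q'}e_1\Downarrow v$ then $E\vdash^q_{q'}\mathrm{match}(x,e_1,(x_h,x_t).e_2)\Downarrow v$; if $E(x)=[v_1,\dots,v_n]$ with $n\ge1$ and $E[x_h\mapsto v_1,x_t\mapsto[v_2,\dots,v_n]]\vdash^{q-K^{\mathrm{matchL}}}_{q'}e_2\Downarrow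 v$ then $E\vdash^q_{q'}\mathrm{match}(x,e_1,(x_h,x_t).e_2)\Downarrow v$; if $E(x)=v_1$ and $(E\setminus\{x\})[x_1\mapsto v_1,x_2\mapsto v_1]\vdash^q_{q'}e\Downarrow v$ then $E\vdash^q_{q'}\mathrm{share}(x,(x_1,x_2).e)\Downarrow v$. We write $E\vdash e\Downarrow v$ if $E\vdash^q_{q'}e\Downarrow v$ for some $q,q'$. Size equivalence of values $|v|\approx|u|$ is the least relation with: $|v|\approx|u|$ whenever $\models v:T$ and $\models u:T$ for some $T\in\{\mathsf{unit},\mathsf{bool},\mathsf{int}\}$; $|(v_1,v_2)|\approx|(u_1,u_2)|$ if $|v_i|\approx|u_i|$ for $i=1,2$; $|[v_1,\dots,v_n]|\approx|[u_1,\dots,u_m]|$ if $m=n$ and $|v_i|\approx|u_i|$ for all $i$. A base context $\Delta$ is a finite map from variables to base types; an environment $E$ is well-formed w.r.t. $\Delta$, written $\models E:\Delta$, if $\models E(x):\Delta(x)$ for all $x\in\mathrm{dom}(\Delta)$. For $X\subseteq\mathrm{dom}(\Delta)$ and well-formed $E_1,E_2$, $E_1\approx_X E_2$ means $|E_1(x)|\approx|E_2(x)|$ for all $x\in X$. An expression $e$ is constant resource w.r.t. $X\subseteq\mathrm{dom}(\Delta)$, written $\mathrm{const}_X(e)$, if for all $E_1,E_2$ with $\models E_i:\Delta$ and $E_1\approx_X E_2$: whenever $E_1\vdash^{p_1}_{p_1'}e\Downarrow v_1$ and $E_2\vdash^{p_2}_{p_2'}e\Downarrow v_2$, then $p_1-p_1'=p_2-p_2'$.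 Resource-annotated types: $A ::= \mathsf{unit}\mid\mathsf{bool}\mid\mathsf{int}\mid L^p(A)\mid A*A$ with $p\in\mathbb Q_{\ge0}$; $|A|$ denotes the base type obtained by erasing annotations. An annotated context $\Gamma$ is a finite map from variables to annotated types, $|\Gamma|$ its erasure; $\Gamma_1,\Gamma_2$ denotes the union of contexts with disjoint domains (contexts are unordered). $\models E:\Gamma$ means $\models E(x):|\Gamma(x)|$ for all $x\in\mathrm{dom}(\Gamma)$. Potential: $\Phi(v:A)=0$ for $A\in\{\mathsf{unit},\mathsf{bool},\mathsf{int}\}$; $\Phi((v_1,v_2):A_1*A_2)=\Phi(v_1:A_1)+\Phi(v_2:A_2)$; $\Phi([v_1,\dots,v_n]:L^p(A))=n\cdot p+\sum_{i=1}^n\Phi(v_i:A)$; $\Phi_E(\Gamma)=\sum_{x\in\mathrm{dom}(\Gamma)}\Phi(E(x):\Gamma(x))$. Sharing relation: $\curlyvee(A\mid A,A)$ for $A\in\{\mathsf{unit},\mathsf{bool},\mathsf{int}\}$; $\curlyvee(A*B\mid A_1*B_1,A_2*B_2)$ if $\curlyvee(A\mid A_1,A_2)$ and $\curlyvee(B\mid B_1,B_2)$; $\curlyvee(L^p(A)\mid L^{p_1}(A_1),L^{p_2}(A_2))$ if $\curlyvee(A\mid A_1,A_2)$ and $p=p_1+p_2$. A signature $\Sigma$ maps function identifiers to nonempty sets of annotated function types $A_1\xrightarrow{q/q'}A_2$ ($q,q'\in\mathbb Q_{\ge0}$). Typing judgements $\Sigma;\Gamma\vdash^{q}_{q'}e:A$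 with $q,q'\in\mathbb Q_{\ge0}$ (every annotation in a rule instance must be a nonnegative rational). Syntax-directed rules: $\Sigma;\emptyset\vdash^{K^{\mathrm{unit}}}_0():\mathsf{unit}$; $\Sigma;\emptyset\vdash^{K^{\mathrm{bool}}}_0 b:\mathsf{bool}$; $\Sigma;\emptyset\vdash^{K^{\mathrm{int}}}_0 n:\mathsf{int}$; $\Sigma;\emptyset\vdash^{K^{\mathrm{nil}}}_0\mathsf{nil}:L^p(A)$; $\Sigma;x:A\vdash^{K^{\mathrm{var}}}_0x:A$; $\Sigma;x_1:\mathsf{bool},x_2:\mathsf{bool}\vdash^{K^{\mathrm{op}}}_0\mathrm{op}_\diamond(x_1,x_2):\mathsf{bool}$ for $\diamond\in\{\mathrm{and},\mathrm{or}\}$; $\Sigma;x_1:\mathsf{int},x_2:\mathsf{int}\vdash^{K^{\mathrm{op}}}_0\mathrm{op}_\diamond(x_1,x_2):\mathsf{bool}$ for comparisons and $:\mathsf{int}$ for $+,-,*,\mathrm{div},\mathrm{mod}$; if $A_1\xrightarrow{q/q'}A_2\in\Sigma(f)$ then $\Sigma;x:A_1\vdash^{q+K^{\mathrm{app}}}_{q'}\mathrm{app}(f,x):A_2$; from $\Sigma;\Gamma_1\vdash^{q-K^{\mathrm{let}}}_{q_1}e_1:A_1$ and $\Sigma;\Gamma_2,x:A_1\vdash^{q_1}_{q'}e_2:A_2$ infer $\Sigma;\Gamma_1,\Gamma_2\vdash^q_{q'}\mathrm{let}(x,e_1,x.e_2):A_2$; from $\Sigma;\Gamma\vdash^{q-K^{\mathrm{cond}}}_{q'}e_t:A$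 and $\Sigma;\Gamma\vdash^{q-K^{\mathrm{cond}}}_{q'}e_f:A$ infer $\Sigma;\Gamma,x:\mathsf{bool}\vdash^q_{q'}\mathrm{if}(x,e_t,e_f):A$; $\Sigma;x_1:A_1,x_2:A_2\vdash^{K^{\mathrm{pair}}}_0\mathrm{pair}(x_1,x_2):A_1*A_2$; from $\Sigma;\Gamma,x_1:A_1,x_2:A_2\vdash^{q-K^{\mathrm{matchP}}}_{q'}e:A$ infer $\Sigma;\Gamma,x:A_1*A_2\vdash^q_{q'}\mathrm{match}(x,(x_1,x_2).e):A$; $\Sigma;x_h:A,x_t:L^p(A)\vdash^{p+K^{\mathrm{cons}}}_0\mathrm{cons}(x_h,x_t):L^p(A)$; from $\Sigma;\Gamma\vdash^{q-K^{\mathrm{matchN}}}_{q'}e_1:B$ and $\Sigma;\Gamma,x_h:A,x_t:L^p(A)\vdash^{q+p-K^{\mathrm{matchL}}}_{q'}e_2:B$ infer $\Sigma;\Gamma,x:L^p(A)\vdash^q_{q'}\mathrm{match}(x,e_1,(x_h,x_t).e_2):B$; from $\Sigma;\Gamma,x_1:A_1,x_2:A_2\vdash^q_{q'}e:B$ and $\curlyvee(A\mid A_1,A_2)$ infer $\Sigma;\Gamma,x:A\vdash^q_{q'}\mathrm{share}(x,(x_1,x_2).e):B$. Structural rules of the constant-resource system: (Relax) from $\Sigma;\Gamma\vdash^p_{p'}e:A$, $q\ge p$ and $q-p=q'-p'$ infer $\Sigma;\Gamma\vdash^q_{q'}e:A$; (Weakening) from $\Sigma;\Gamma\vdash^q_{q'}e:B$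 and $\curlyvee(A\mid A,A)$ infer $\Sigma;\Gamma,x:A\vdash^q_{q'}e:B$. The program is well-typed w.r.t. $\Sigma$ in this system if for every $f$ and every $A_1\xrightarrow{q/q'}A_2\in\Sigma(f)$, $\Sigma;y^f:A_1\vdash^q_{q'}e_f:A_2$ is derivable. *)

theory Defs
  imports Complex_Main
begin

type_synonym var = string
type_synonym fname = string

datatype bty = TUnit | TBool | TInt | TList bty | TProd bty bty

datatype val = VUnit | VBool bool | VInt int | VList "val list" | VPair val val

inductive vty :: "val \<Rightarrow> bty \<Rightarrow> bool" where
  "vty VUnit TUnit"
| "vty (VBool b) TBool"
| "vty (VInt n) TInt"
| "vty v1 T1 \<Longrightarrow> vty v2 T2 \<Longrightarrow> vty (VPair v1 v2) (TProd T1 T2)"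
| "(\<forall>w\<in>set ws. vty w T) \<Longrightarrow> vty (VList ws) (TList T)"

datatype binop = OAdd | OSub | OMul | ODiv | OMod | OEq | ONeq | OLt | OGt | OAnd | OOr

datatype expr =
    EUnit | ETrue | EFalse | EInt int | EVar var
  | EOp binop var var
  | EApp fname var
  | EIf var expr expr
  | ELet var expr expr
  | EPair var var
  | EMatchP var var var expr    \<comment> \<open>match(x, (x1,x2).e)\<close>
  | ENil
  | ECons var var
  | EMatchL var expr var var expr  \<comment> \<open>match(x, e1, (xh,xt).e2)\<close>
  | EShare var var var expr     \<comment> \<open>share(x, (x1,x2).e)\<close>

fun eval_op :: "binop \<Rightarrow> val \<Rightarrow> val \<Rightarrow> val option" where
  "eval_op OAdd (VInt a) (VInt b) = Some (VInt (a + b))"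
| "eval_op OSub (VInt a) (VInt b) = Some (VInt (a - b))"
| "eval_op OMul (VInt a) (VInt b) = Some (VInt (a * b))"
| "eval_op ODiv (VInt a) (VInt b) = Some (VInt (a div b))"
| "eval_op OMod (VInt a) (VInt b) = Some (VInt (a mod b))"
| "eval_op OEq (VInt a) (VInt b) = Some (VBool (a = b))"
| "eval_op ONeq (VInt a) (VInt b) = Some (VBool (a \<noteq> b))"
| "eval_op OLt (VInt a) (VInt b) = Some (VBool (a < b))"
| "eval_op OGt (VInt a) (VInt b) = Some (VBool (a > b))"
| "eval_op OAnd (VBool a) (VBool b) = Some (VBool (a \<and> b))"
| "eval_op OOr (VBool a) (VBool b) = Some (VBool (a \<or> b))"
| "eval_op _ _ _ = None"

type_synonym prog = "fname \<Rightarrow> var \<times> expr"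

type_synonym env = "var \<Rightarrow> val option"

record costs =
  Kunit :: rat  Kbool :: rat  Kint :: rat  Knil :: rat  Kvar :: rat  Kop :: rat
  Kapp :: rat  Klet :: rat  Kcond :: rat  Kpair :: rat  KmatchP :: rat  Kcons :: rat
  KmatchN :: rat  KmatchL :: rat

section \<open>Cost semantics  E |-^q_q' e \<Down> v  (all counters nonnegative)\<close>

inductive eval :: "prog \<Rightarrow> costs \<Rightarrow> env \<Rightarrow> rat \<Rightarrow> rat \<Rightarrow> expr \<Rightarrow> val \<Rightarrow> bool" where
  E_unit: "0 \<le> q \<Longrightarrow> 0 \<le> q + Kunit K \<Longrightarrow> eval P K E (q + Kunit K) q EUnit VUnit"
| E_true: "0 \<le> q \<Longrightarrow> 0 \<le> q + Kbool K \<Longrightarrow> eval P K E (q + Kbool K) q ETrue (VBool True)"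
| E_false: "0 \<le> q \<Longrightarrow> 0 \<le> q + Kbool K \<Longrightarrow> eval P K E (q + Kbool K) q EFalse (VBool False)"
| E_int: "0 \<le> q \<Longrightarrow> 0 \<le> q + Kint K \<Longrightarrow> eval P K E (q + Kint K) q (EInt n) (VInt n)"
| E_nil: "0 \<le> q \<Longrightarrow> 0 \<le> q + Knil K \<Longrightarrow> eval P K E (q + Knil K) q ENil (VList [])"
| E_var: "E x = Some w \<Longrightarrow> 0 \<le> q \<Longrightarrow> 0 \<le> q + Kvar K \<Longrightarrow> eval P K E (q + Kvar K) q (EVar x) w"
| E_op: "E x1 = Some w1 \<Longrightarrow> E x2 = Some w2 \<Longrightarrow> eval_op bop w1 w2 = Some w \<Longrightarrow>
    0 \<le> q \<Longrightarrow> 0 \<le> q + Kop K \<Longrightarrow> eval P K E (q + Kop K) q (EOp bop x1 x2) w"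
| E_pair: "E x1 = Some w1 \<Longrightarrow> E x2 = Some w2 \<Longrightarrow>
    0 \<le> q \<Longrightarrow> 0 \<le> q + Kpair K \<Longrightarrow> eval P K E (q + Kpair K) q (EPair x1 x2) (VPair w1 w2)"
| E_cons: "E xh = Some w \<Longrightarrow> E xt = Some (VList ws) \<Longrightarrow>
    0 \<le> q \<Longrightarrow> 0 \<le> q + Kcons K \<Longrightarrow> eval P K E (q + Kcons K) q (ECons xh xt) (VList (w # ws))"
| E_app: "P f = (y, ef) \<Longrightarrow> E x = Some w \<Longrightarrow> eval P K (E(y \<mapsto> w)) q q' ef v \<Longrightarrow>
    0 \<le> q + Kapp K \<Longrightarrow> eval P K E (q + Kapp K) q' (EApp f x) v"
| E_let: "eval P K E (q - Klet K) q1 e1 v1 \<Longrightarrow> eval P K (E(x \<mapsto> v1)) q1 q' e2 v \<Longrightarrow>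
    0 \<le> q \<Longrightarrow> eval P K E q q' (ELet x e1 e2) v"
| E_if_true: "E x = Some (VBool True) \<Longrightarrow> eval P K E (q - Kcond K) q' et v \<Longrightarrow>
    0 \<le> q \<Longrightarrow> eval P K E q q' (EIf x et ef) v"
| E_if_false: "E x = Some (VBool False) \<Longrightarrow> eval P K E (q - Kcond K) q' ef v \<Longrightarrow>
    0 \<le> q \<Longrightarrow> eval P K E q q' (EIf x et ef) v"
| E_matchP: "E x = Some (VPair w1 w2) \<Longrightarrow> eval P K (E(x1 \<mapsto> w1, x2 \<mapsto> w2)) (q - KmatchP K) q' e v \<Longrightarrow>
    0 \<le> q \<Longrightarrow> eval P K E q q' (EMatchP x x1 x2 e) v"
| E_matchN: "E x = Some (VList []) \<Longrightarrow> eval P K E (q - KmatchN K) q' e1 v \<Longrightarrow>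
    0 \<le> q \<Longrightarrow> eval P K E q q' (EMatchL x e1 xh xt e2) v"
| E_matchL: "E x = Some (VList (w # ws)) \<Longrightarrow>
    eval P K (E(xh \<mapsto> w, xt \<mapsto> VList ws)) (q - KmatchL K) q' e2 v \<Longrightarrow>
    0 \<le> q \<Longrightarrow> eval P K E q q' (EMatchL x e1 xh xt e2) v"
| E_share: "E x = Some w \<Longrightarrow> eval P K ((E(x := None))(x1 \<mapsto> w, x2 \<mapsto> w)) q q' e v \<Longrightarrow>
    eval P K E q q' (EShare x x1 x2 e) v"

inductive size_eq :: "val \<Rightarrow> val \<Rightarrow> bool" where
  "T \<in> {TUnit, TBool, TInt} \<Longrightarrow> vty v T \<Longrightarrow> vty u T \<Longrightarrow> size_eq v u"
| "size_eq v1 u1 \<Longrightarrow> size_eq v2 u2 \<Longrightarrow> size_eq (VPair v1 v2) (VPair u1 u2)"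
| "length vs = length us \<Longrightarrow> (\<forall>i < length vs. size_eq (vs ! i) (us ! i)) \<Longrightarrow>
    size_eq (VList vs) (VList us)"

type_synonym bctx = "var \<Rightarrow> bty option"

definition env_wf :: "env \<Rightarrow> bctx \<Rightarrow> bool" where
  "env_wf E \<Delta> \<longleftrightarrow> (\<forall>x T. \<Delta> x = Some T \<longrightarrow> (\<exists>w. E x = Some w \<and> vty w T))"

definition env_size_eq :: "var set \<Rightarrow> env \<Rightarrow> env \<Rightarrow> bool" where
  "env_size_eq X E1 E2 \<longleftrightarrow> (\<forall>x\<in>X. size_eq (the (E1 x)) (the (E2 x)))"

definition const_res :: "prog \<Rightarrow> costs \<Rightarrow> bctx \<Rightarrow> var set \<Rightarrow> expr \<Rightarrow> bool" where
  "const_res P K \<Delta> X e \<longleftrightarrow>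
     (\<forall>E1 E2 p1 p1' v1 p2 p2' v2.
        env_wf E1 \<Delta> \<longrightarrow> env_wf E2 \<Delta> \<longrightarrow> env_size_eq X E1 E2 \<longrightarrow>
        eval P K E1 p1 p1' e v1 \<longrightarrow> eval P K E2 p2 p2' e v2 \<longrightarrow> p1 - p1' = p2 - p2')"

datatype aty = AUnit | ABool | AInt | AList rat aty | AProd aty aty

fun erase :: "aty \<Rightarrow> bty" where
  "erase AUnit = TUnit" | "erase ABool = TBool" | "erase AInt = TInt"
| "erase (AList p A) = TList (erase A)" | "erase (AProd A B) = TProd (erase A) (erase B)"

fun ann_ok :: "aty \<Rightarrow> bool" where
  "ann_ok (AList p A) \<longleftrightarrow> 0 \<le> p \<and> ann_ok A"
| "ann_ok (AProd A B) \<longleftrightarrow> ann_ok A \<and> ann_ok B"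
| "ann_ok _ \<longleftrightarrow> True"

type_synonym actx = "var \<Rightarrow> aty option"

definition erase_ctx :: "actx \<Rightarrow> bctx" where
  "erase_ctx \<Gamma> = map_option erase \<circ> \<Gamma>"

definition ctx_ok :: "actx \<Rightarrow> bool" where
  "ctx_ok \<Gamma> \<longleftrightarrow> (\<forall>x A. \<Gamma> x = Some A \<longrightarrow> ann_ok A)"

text \<open>Side condition: every annotation in the conclusion of a rule instance is nonnegative
  (premises are covered by their own rule instances).\<close>
definition okj :: "actx \<Rightarrow> rat \<Rightarrow> rat \<Rightarrow> aty \<Rightarrow> bool" where
  "okj \<Gamma> q q' A \<longleftrightarrow> ctx_ok \<Gamma> \<and> ann_ok A \<and> 0 \<le> q \<and> 0 \<le> q'"

inductive share_rel :: "aty \<Rightarrow> aty \<Rightarrow> aty \<Rightarrow> bool" where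
  "share_rel AUnit AUnit AUnit"
| "share_rel ABool ABool ABool"
| "share_rel AInt AInt AInt"
| "share_rel A A1 A2 \<Longrightarrow> share_rel B B1 B2 \<Longrightarrow> share_rel (AProd A B) (AProd A1 B1) (AProd A2 B2)"
| "share_rel A A1 A2 \<Longrightarrow> p = p1 + p2 \<Longrightarrow> share_rel (AList p A) (AList p1 A1) (AList p2 A2)"

text \<open>Signature: function types  A1 --q/q'--> A2  represented as (A1, q, q', A2).\<close>
type_synonym sig = "fname \<Rightarrow> (aty \<times> rat \<times> rat \<times> aty) set"

fun op_sig :: "binop \<Rightarrow> aty \<times> aty" where
  "op_sig OAnd = (ABool, ABool)" | "op_sig OOr = (ABool, ABool)"
| "op_sig OEq = (AInt, ABool)" | "op_sig ONeq = (AInt, ABool)"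
| "op_sig OLt = (AInt, ABool)" | "op_sig OGt = (AInt, ABool)"
| "op_sig OAdd = (AInt, AInt)" | "op_sig OSub = (AInt, AInt)" | "op_sig OMul = (AInt, AInt)"
| "op_sig ODiv = (AInt, AInt)" | "op_sig OMod = (AInt, AInt)"

section \<open>Constant-resource type system  \<Sigma>;\<Gamma> |-^q_q' e : A\<close>

inductive typing :: "costs \<Rightarrow> sig \<Rightarrow> actx \<Rightarrow> rat \<Rightarrow> rat \<Rightarrow> expr \<Rightarrow> aty \<Rightarrow> bool" where
  T_unit: "okj Map.empty (Kunit K) 0 AUnit \<Longrightarrow> typing K \<Sigma> Map.empty (Kunit K) 0 EUnit AUnit"
| T_true: "okj Map.empty (Kbool K) 0 ABool \<Longrightarrow> typing K \<Sigma> Map.empty (Kbool K) 0 ETrue ABool"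
| T_false: "okj Map.empty (Kbool K) 0 ABool \<Longrightarrow> typing K \<Sigma> Map.empty (Kbool K) 0 EFalse ABool"
| T_int: "okj Map.empty (Kint K) 0 AInt \<Longrightarrow> typing K \<Sigma> Map.empty (Kint K) 0 (EInt n) AInt"
| T_nil: "okj Map.empty (Knil K) 0 (AList p A) \<Longrightarrow> typing K \<Sigma> Map.empty (Knil K) 0 ENil (AList p A)"
| T_var: "okj [x \<mapsto> A] (Kvar K) 0 A \<Longrightarrow> typing K \<Sigma> [x \<mapsto> A] (Kvar K) 0 (EVar x) A"
| T_op: "x1 \<noteq> x2 \<Longrightarrow> op_sig bop = (Ta, Tr) \<Longrightarrow> okj [x1 \<mapsto> Ta, x2 \<mapsto> Ta] (Kop K) 0 Tr \<Longrightarrow>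
    typing K \<Sigma> [x1 \<mapsto> Ta, x2 \<mapsto> Ta] (Kop K) 0 (EOp bop x1 x2) Tr"
| T_app: "(A1, q, q', A2) \<in> \<Sigma> f \<Longrightarrow> 0 \<le> q \<Longrightarrow> okj [x \<mapsto> A1] (q + Kapp K) q' A2 \<Longrightarrow>
    typing K \<Sigma> [x \<mapsto> A1] (q + Kapp K) q' (EApp f x) A2"
| T_let: "typing K \<Sigma> \<Gamma>1 (q - Klet K) q1 e1 A1 \<Longrightarrow> typing K \<Sigma> (\<Gamma>2(x \<mapsto> A1)) q1 q' e2 A2 \<Longrightarrow>
    x \<notin> dom \<Gamma>2 \<Longrightarrow> dom \<Gamma>1 \<inter> dom \<Gamma>2 = {} \<Longrightarrow> okj (\<Gamma>1 ++ \<Gamma>2) q q' A2 \<Longrightarrow>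
    typing K \<Sigma> (\<Gamma>1 ++ \<Gamma>2) q q' (ELet x e1 e2) A2"
| T_if: "typing K \<Sigma> \<Gamma> (q - Kcond K) q' et A \<Longrightarrow> typing K \<Sigma> \<Gamma> (q - Kcond K) q' ef A \<Longrightarrow>
    x \<notin> dom \<Gamma> \<Longrightarrow> okj (\<Gamma>(x \<mapsto> ABool)) q q' A \<Longrightarrow>
    typing K \<Sigma> (\<Gamma>(x \<mapsto> ABool)) q q' (EIf x et ef) A"
| T_pair: "x1 \<noteq> x2 \<Longrightarrow> okj [x1 \<mapsto> A1, x2 \<mapsto> A2] (Kpair K) 0 (AProd A1 A2) \<Longrightarrow>
    typing K \<Sigma> [x1 \<mapsto> A1, x2 \<mapsto> A2] (Kpair K) 0 (EPair x1 x2) (AProd A1 A2)"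
| T_matchP: "typing K \<Sigma> (\<Gamma>(x1 \<mapsto> A1, x2 \<mapsto> A2)) (q - KmatchP K) q' e A \<Longrightarrow>
    x1 \<noteq> x2 \<Longrightarrow> x1 \<notin> dom \<Gamma> \<Longrightarrow> x2 \<notin> dom \<Gamma> \<Longrightarrow> x \<notin> dom \<Gamma> \<Longrightarrow>
    okj (\<Gamma>(x \<mapsto> AProd A1 A2)) q q' A \<Longrightarrow>
    typing K \<Sigma> (\<Gamma>(x \<mapsto> AProd A1 A2)) q q' (EMatchP x x1 x2 e) A"
| T_cons: "xh \<noteq> xt \<Longrightarrow> okj [xh \<mapsto> A, xt \<mapsto> AList p A] (p + Kcons K) 0 (AList p A) \<Longrightarrow>
    typing K \<Sigma> [xh \<mapsto> A, xt \<mapsto> AList p A] (p + Kcons K) 0 (ECons xh xt) (AList p A)"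
| T_matchL: "typing K \<Sigma> \<Gamma> (q - KmatchN K) q' e1 B \<Longrightarrow>
    typing K \<Sigma> (\<Gamma>(xh \<mapsto> A, xt \<mapsto> AList p A)) (q + p - KmatchL K) q' e2 B \<Longrightarrow>
    xh \<noteq> xt \<Longrightarrow> xh \<notin> dom \<Gamma> \<Longrightarrow> xt \<notin> dom \<Gamma> \<Longrightarrow> x \<notin> dom \<Gamma> \<Longrightarrow>
    okj (\<Gamma>(x \<mapsto> AList p A)) q q' B \<Longrightarrow>
    typing K \<Sigma> (\<Gamma>(x \<mapsto> AList p A)) q q' (EMatchL x e1 xh xt e2) B"
| T_share: "typing K \<Sigma> (\<Gamma>(x1 \<mapsto> A1, x2 \<mapsto> A2)) q q' e B \<Longrightarrow> share_rel A A1 A2 \<Longrightarrow>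
    x1 \<noteq> x2 \<Longrightarrow> x1 \<notin> dom \<Gamma> \<Longrightarrow> x2 \<notin> dom \<Gamma> \<Longrightarrow> x \<notin> dom \<Gamma> \<Longrightarrow>
    okj (\<Gamma>(x \<mapsto> A)) q q' B \<Longrightarrow>
    typing K \<Sigma> (\<Gamma>(x \<mapsto> A)) q q' (EShare x x1 x2 e) B"
| T_relax: "typing K \<Sigma> \<Gamma> p p' e A \<Longrightarrow> p \<le> q \<Longrightarrow> q - p = q' - p' \<Longrightarrow> okj \<Gamma> q q' A \<Longrightarrow>
    typing K \<Sigma> \<Gamma> q q' e A"
| T_weak: "typing K \<Sigma> \<Gamma> q q' e B \<Longrightarrow> share_rel A A A \<Longrightarrow> x \<notin> dom \<Gamma> \<Longrightarrow>
    okj (\<Gamma>(x \<mapsto> A)) q q' B \<Longrightarrow> typing K \<Sigma> (\<Gamma>(x \<mapsto> A)) q q' e B"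

definition well_typed :: "prog \<Rightarrow> costs \<Rightarrow> sig \<Rightarrow> bool" where
  "well_typed P K \<Sigma> \<longleftrightarrow>
     (\<forall>f A1 q q' A2. (A1, q, q', A2) \<in> \<Sigma> f \<longrightarrow>
        typing K \<Sigma> [fst (P f) \<mapsto> A1] q q' (snd (P f)) A2)"

end

theory Submission imports Defs begin

fun pot :: "val \<Rightarrow> aty \<Rightarrow> rat" where
  "pot (VList ws) (AList p A) = of_nat (length ws) * p + sum_list (map (\<lambda>w. pot w A) ws)"
| "pot (VPair a b) (AProd A B) = pot a A + pot b B"
| "pot _ _ = 0"

definition potE :: "env \<Rightarrow> actx \<Rightarrow> rat" where
  "potE E \<Gamma> = (\<Sum>x\<in>dom \<Gamma>. pot (the (E x)) (the (\<Gamma> x)))"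

lemma pot_share: "share_rel A A1 A2 \<Longrightarrow> pot v A = pot v A1 + pot v A2"
proof (induction arbitrary: v rule: share_rel.induct)
  case (4 A A1 A2 B B1 B2)
  then show ?case by (cases v) auto
next
  case (5 A A1 A2 p p1 p2)
  then show ?case by (cases v) (auto simp: algebra_simps sum_list_addf)
qed auto

lemma pot_zero: "share_rel A A A \<Longrightarrow> pot v A = 0"
  using pot_share[of A A A v] by simp

lemma vty_base_pot: "T \<in> {TUnit, TBool, TInt} \<Longrightarrow> vty v T \<Longrightarrow> pot v A = 0"
  by (auto elim: vty.cases)

lemma size_eq_pot: "size_eq v u \<Longrightarrow> pot v A = pot u A"
proof (induction arbitrary: A rule: size_eq.induct)
  case (1 T v u)
  then show ?case using vty_base_pot by metis
next
  case (2 v1 u1 v2 u2)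
  then show ?case by (cases A) auto
next
  case (3 vs us)
  show ?case
  proof (cases A)
    case (AList p B)
    have "map (\<lambda>w. pot w B) vs = map (\<lambda>w. pot w B) us"
      using 3 by (intro nth_equalityI) auto
    then show ?thesis using AList 3 by simp
  qed auto
qed

lemma typing_finite: "typing K \<Sigma> \<Gamma> q q' e A \<Longrightarrow> finite (dom \<Gamma>)"
proof (induction rule: typing.induct)
  case (T_let K \<Sigma> \<Gamma>1 q q1 e1 A1 \<Gamma>2 x q' e2 A2)
  then show ?case by (simp add: fun_upd_def[symmetric] dom_map_add)
qed (simp_all add: fun_upd_def[symmetric])

lemma potE_upd: "finite (dom \<Gamma>) \<Longrightarrow> x \<notin> dom \<Gamma> \<Longrightarrow>
   potE E (\<Gamma>(x \<mapsto> A)) = potE E \<Gamma> + pot (the (E x)) A"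
  unfolding potE_def by (auto intro!: sum.cong simp: add.commute)

lemma potE_cong: "(\<And>x. x \<in> dom \<Gamma> \<Longrightarrow> E x = E' x) \<Longrightarrow> potE E \<Gamma> = potE E' \<Gamma>"
  unfolding potE_def by (auto intro!: sum.cong)

lemma potE_add: "finite (dom \<Gamma>1) \<Longrightarrow> finite (dom \<Gamma>2) \<Longrightarrow> dom \<Gamma>1 \<inter> dom \<Gamma>2 = {} \<Longrightarrow>
   potE E (\<Gamma>1 ++ \<Gamma>2) = potE E \<Gamma>1 + potE E \<Gamma>2"
proof -
  assume f: "finite (dom \<Gamma>1)" "finite (dom \<Gamma>2)" and d: "dom \<Gamma>1 \<inter> dom \<Gamma>2 = {}"
  have "potE E (\<Gamma>1 ++ \<Gamma>2) = (\<Sum>x\<in>dom \<Gamma>1 \<union> dom \<Gamma>2. pot (the (E x)) (the ((\<Gamma>1 ++ \<Gamma>2) x)))"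
    by (simp add: potE_def Un_commute)
  also have "\<dots> = (\<Sum>x\<in>dom \<Gamma>1. pot (the (E x)) (the ((\<Gamma>1 ++ \<Gamma>2) x))) + (\<Sum>x\<in>dom \<Gamma>2. pot (the (E x)) (the ((\<Gamma>1 ++ \<Gamma>2) x)))"
    using f d by (simp add: sum.union_disjoint)
  also have "\<dots> = potE E \<Gamma>1 + potE E \<Gamma>2"
    unfolding potE_def using d
    by (intro arg_cong2[where f="(+)"] sum.cong) (auto simp: map_add_def split: option.splits)
  finally show ?thesis .
qed

lemma potE_empty[simp]: "potE E Map.empty = 0" by (simp add: potE_def)


lemma potE_single[simp]: "potE E [x \<mapsto> A] = pot (the (E x)) A"
  using potE_upd[of Map.empty x E A] by simp

lemma finite_dom_upd: "finite (dom (\<Gamma>(x \<mapsto> A))) \<Longrightarrow> finite (dom \<Gamma>)"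
  by (metis dom_fun_upd finite_insert option.distinct(1))

lemma potE_weak: "typing K \<Sigma> \<Gamma> q q' e B \<Longrightarrow> share_rel A A A \<Longrightarrow> x \<notin> dom \<Gamma> \<Longrightarrow>
  potE E (\<Gamma>(x \<mapsto> A)) = potE E \<Gamma>"
  by (simp add: potE_upd typing_finite pot_zero)

lemma potE_upd2: "finite (dom \<Gamma>) \<Longrightarrow> x1 \<notin> dom \<Gamma> \<Longrightarrow> x2 \<notin> dom \<Gamma> \<Longrightarrow> x1 \<noteq> x2 \<Longrightarrow>
   potE E (\<Gamma>(x1 \<mapsto> A1, x2 \<mapsto> A2)) = potE E \<Gamma> + pot (the (E x1)) A1 + pot (the (E x2)) A2"
  by (simp add: potE_upd)

lemma case_unit: "typing K \<Sigma> \<Gamma> r r' e A \<Longrightarrow> e = EUnit \<Longrightarrow>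
   Kunit K = r - r' + potE E \<Gamma> - pot VUnit A"
proof (induction rule: typing.induct)
  case (T_weak K \<Sigma> \<Gamma> q q' e B A x)
  then show ?case using potE_weak[OF T_weak.hyps(1-3), of E] by (simp add: fun_upd_def)
next
  case (T_relax K \<Sigma> \<Gamma> p p' e A q q')
  then show ?case by simp
qed (auto simp: fun_upd_def[symmetric] potE_upd algebra_simps)

lemma case_true: "typing K \<Sigma> \<Gamma> r r' e A \<Longrightarrow> e = ETrue \<Longrightarrow>
   Kbool K = r - r' + potE E \<Gamma> - pot (VBool True) A"
proof (induction rule: typing.induct)
  case (T_weak K \<Sigma> \<Gamma> q q' e B A x)
  then show ?case using potE_weak[OF T_weak.hyps(1-3), of E] by (simp add: fun_upd_def)
next
  case (T_relax K \<Sigma> \<Gamma> p p' e A q q')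
  then show ?case by simp
qed (auto simp: fun_upd_def[symmetric] potE_upd algebra_simps)

lemma case_false: "typing K \<Sigma> \<Gamma> r r' e A \<Longrightarrow> e = EFalse \<Longrightarrow>
   Kbool K = r - r' + potE E \<Gamma> - pot (VBool False) A"
proof (induction rule: typing.induct)
  case (T_weak K \<Sigma> \<Gamma> q q' e B A x)
  then show ?case using potE_weak[OF T_weak.hyps(1-3), of E] by (simp add: fun_upd_def)
next
  case (T_relax K \<Sigma> \<Gamma> p p' e A q q')
  then show ?case by simp
qed (auto simp: fun_upd_def[symmetric] potE_upd algebra_simps)

lemma case_int: "typing K \<Sigma> \<Gamma> r r' e A \<Longrightarrow> e = EInt n \<Longrightarrow>
   Kint K = r - r' + potE E \<Gamma> - pot (VInt n) A"
proof (induction rule: typing.induct)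
  case (T_weak K \<Sigma> \<Gamma> q q' e B A x)
  then show ?case using potE_weak[OF T_weak.hyps(1-3), of E] by (simp add: fun_upd_def)
next
  case (T_relax K \<Sigma> \<Gamma> p p' e A q q')
  then show ?case by simp
qed (auto simp: fun_upd_def[symmetric] potE_upd algebra_simps)

lemma case_nil: "typing K \<Sigma> \<Gamma> r r' e A \<Longrightarrow> e = ENil \<Longrightarrow>
   Knil K = r - r' + potE E \<Gamma> - pot (VList []) A"
proof (induction rule: typing.induct)
  case (T_weak K \<Sigma> \<Gamma> q q' e B A x)
  then show ?case using potE_weak[OF T_weak.hyps(1-3), of E] by (simp add: fun_upd_def)
next
  case (T_relax K \<Sigma> \<Gamma> p p' e A q q')
  then show ?case by simp
qed (auto simp: fun_upd_def[symmetric] potE_upd algebra_simps)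

lemma case_var: "typing K \<Sigma> \<Gamma> r r' e A \<Longrightarrow> e = EVar x \<Longrightarrow> E x = Some w \<Longrightarrow>
   Kvar K = r - r' + potE E \<Gamma> - pot w A"
proof (induction rule: typing.induct)
  case (T_weak K \<Sigma> \<Gamma> q q' e B A x)
  then show ?case using potE_weak[OF T_weak.hyps(1-3), of E] by (simp add: fun_upd_def)
next
  case (T_relax K \<Sigma> \<Gamma> p p' e A q q')
  then show ?case by simp
qed (auto simp: fun_upd_def[symmetric] potE_upd algebra_simps)

lemma case_op: "typing K \<Sigma> \<Gamma> r r' e A \<Longrightarrow> e = EOp bop x1 x2 \<Longrightarrow> E x1 = Some w1 \<Longrightarrow> E x2 = Some w2 \<Longrightarrow> eval_op bop w1 w2 = Some w \<Longrightarrow>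
   Kop K = r - r' + potE E \<Gamma> - pot w A"
proof (induction rule: typing.induct)
  case (T_weak K \<Sigma> \<Gamma> q q' e B A x)
  then show ?case using potE_weak[OF T_weak.hyps(1-3), of E] by (simp add: fun_upd_def)
next
  case (T_relax K \<Sigma> \<Gamma> p p' e A q q')
  then show ?case by simp
next
  case (T_op x1 x2 bop Ta Tr K)
  then show ?case by (cases bop; cases w1; cases w2) (auto simp: fun_upd_def[symmetric] potE_upd)
qed (auto simp: fun_upd_def[symmetric] potE_upd algebra_simps)

lemma case_pair: "typing K \<Sigma> \<Gamma> r r' e A \<Longrightarrow> e = EPair x1 x2 \<Longrightarrow> E x1 = Some w1 \<Longrightarrow> E x2 = Some w2 \<Longrightarrow>
   Kpair K = r - r' + potE E \<Gamma> - pot (VPair w1 w2) A"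
proof (induction rule: typing.induct)
  case (T_weak K \<Sigma> \<Gamma> q q' e B A x)
  then show ?case using potE_weak[OF T_weak.hyps(1-3), of E] by (simp add: fun_upd_def)
next
  case (T_relax K \<Sigma> \<Gamma> p p' e A q q')
  then show ?case by simp
qed (auto simp: fun_upd_def[symmetric] potE_upd algebra_simps)

lemma case_cons: "typing K \<Sigma> \<Gamma> r r' e A \<Longrightarrow> e = ECons xh xt \<Longrightarrow> E xh = Some w \<Longrightarrow> E xt = Some (VList ws) \<Longrightarrow>
   Kcons K = r - r' + potE E \<Gamma> - pot (VList (w # ws)) A"
proof (induction rule: typing.induct)
  case (T_weak K \<Sigma> \<Gamma> q q' e B A x)
  then show ?case using potE_weak[OF T_weak.hyps(1-3), of E] by (simp add: fun_upd_def)
next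
  case (T_relax K \<Sigma> \<Gamma> p p' e A q q')
  then show ?case by simp
qed (auto simp: fun_upd_def[symmetric] potE_upd algebra_simps)


lemma case_app: "typing K \<Sigma> \<Gamma> r r' e A \<Longrightarrow> e = EApp f x \<Longrightarrow> well_typed P K \<Sigma> \<Longrightarrow>
   P f = (y, ef) \<Longrightarrow> E x = Some w \<Longrightarrow>
   (\<And>\<Gamma> r r' A. typing K \<Sigma> \<Gamma> r r' ef A \<Longrightarrow> a - a' = r - r' + potE (E(y \<mapsto> w)) \<Gamma> - pot v A) \<Longrightarrow>
   (a + Kapp K) - a' = r - r' + potE E \<Gamma> - pot v A"
proof (induction rule: typing.induct)
  case (T_weak K \<Sigma> \<Gamma> q q' e B A x)
  show ?case using T_weak.IH[OF T_weak.prems] potE_weak[OF T_weak.hyps(1-3), of E] by (simp add: fun_upd_def)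
next
  case (T_relax K \<Sigma> \<Gamma> p p' e A q q')
  show ?case using T_relax.IH[OF T_relax.prems] T_relax.hyps(3) by simp
next
  case (T_app A1 q q' A2 \<Sigma> f' x' K)
  have eq: "f' = f" "x' = x" using T_app.prems(1) by simp_all
  have "typing K \<Sigma> [y \<mapsto> A1] q q' ef A2" using T_app.hyps(1) T_app.prems(2,3) eq
    unfolding well_typed_def by (metis fst_conv snd_conv)
  from T_app.prems(5)[OF this] T_app.prems(4) eq show ?case by (simp add: fun_upd_def[symmetric])
qed (simp only: expr.distinct)+

lemma case_let: "typing K \<Sigma> \<Gamma> r r' e B \<Longrightarrow> e = ELet x e1 e2 \<Longrightarrow>
   (\<And>\<Gamma> r r' A. typing K \<Sigma> \<Gamma> r r' e1 A \<Longrightarrow> (a - Klet K) - a1 = r - r' + potE E \<Gamma> - pot v1 A) \<Longrightarrow>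
   (\<And>\<Gamma> r r' A. typing K \<Sigma> \<Gamma> r r' e2 A \<Longrightarrow> a1 - a' = r - r' + potE (E(x \<mapsto> v1)) \<Gamma> - pot v A) \<Longrightarrow>
   a - a' = r - r' + potE E \<Gamma> - pot v B"
proof (induction rule: typing.induct)
  case (T_weak K \<Sigma> \<Gamma> q q' e B A x)
  show ?case using T_weak.IH[OF T_weak.prems] potE_weak[OF T_weak.hyps(1-3), of E] by (simp add: fun_upd_def)
next
  case (T_relax K \<Sigma> \<Gamma> p p' e A q q')
  show ?case using T_relax.IH[OF T_relax.prems] T_relax.hyps(3) by simp
next
  case (T_let K \<Sigma> \<Gamma>1 q q1 e1' A1 \<Gamma>2 y q' e2' A2)
  have f1: "finite (dom \<Gamma>1)" using typing_finite[OF T_let.hyps(1)] .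
  have f2: "finite (dom \<Gamma>2)" using typing_finite[OF T_let.hyps(2)] by (simp add: fun_upd_def[symmetric])
  have eq: "y = x" "e1' = e1" "e2' = e2" using T_let.prems(1) by simp_all
  have t1: "typing K \<Sigma> \<Gamma>1 (q - Klet K) q1 e1 A1" using T_let.hyps(1) eq by simp
  have t2: "typing K \<Sigma> (\<Gamma>2(x \<mapsto> A1)) q1 q' e2 A2" using T_let.hyps(2) eq by simp
  note h1 = T_let.prems(2)[OF t1]
  note h2 = T_let.prems(3)[OF t2]
  have "potE (E(x \<mapsto> v1)) (\<Gamma>2(x \<mapsto> A1)) = potE (E(x \<mapsto> v1)) \<Gamma>2 + pot v1 A1"
    using potE_upd[OF f2, of x] T_let.hyps(3) eq by simp
  also have "potE (E(x \<mapsto> v1)) \<Gamma>2 = potE E \<Gamma>2"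
    using T_let.hyps(3) eq by (intro potE_cong) auto
  finally have h3: "potE (E(x \<mapsto> v1)) (\<Gamma>2(x \<mapsto> A1)) = potE E \<Gamma>2 + pot v1 A1" .
  have "potE E (\<Gamma>1 ++ \<Gamma>2) = potE E \<Gamma>1 + potE E \<Gamma>2"
    using potE_add[OF f1 f2 T_let.hyps(4)] .
  then show ?case using h1 h2 h3 by (simp add: fun_upd_def)
qed (simp only: expr.distinct)+

lemma case_if: "typing K \<Sigma> \<Gamma> r r' e B \<Longrightarrow> e = EIf x et ef \<Longrightarrow> eb = et \<or> eb = ef \<Longrightarrow>
   (\<And>\<Gamma> r r' A. typing K \<Sigma> \<Gamma> r r' eb A \<Longrightarrow> (a - Kcond K) - a' = r - r' + potE E \<Gamma> - pot v A) \<Longrightarrow>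
   a - a' = r - r' + potE E \<Gamma> - pot v B"
proof (induction rule: typing.induct)
  case (T_weak K \<Sigma> \<Gamma> q q' e B A x)
  show ?case using T_weak.IH[OF T_weak.prems] potE_weak[OF T_weak.hyps(1-3), of E] by (simp add: fun_upd_def)
next
  case (T_relax K \<Sigma> \<Gamma> p p' e A q q')
  show ?case using T_relax.IH[OF T_relax.prems] T_relax.hyps(3) by simp
next
  case (T_if K \<Sigma> \<Gamma> q q' et' A ef' y)
  have f: "finite (dom \<Gamma>)" using typing_finite[OF T_if.hyps(1)] .
  have t: "typing K \<Sigma> \<Gamma> (q - Kcond K) q' eb A" using T_if.hyps(1,2) T_if.prems(1,2) by auto
  note h = T_if.prems(3)[OF t]
  have "potE E (\<Gamma>(y \<mapsto> ABool)) = potE E \<Gamma>" using potE_upd[OF f T_if.hyps(3)] by simp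
  then show ?case using h by (simp add: fun_upd_def)
qed (simp only: expr.distinct)+

lemma case_matchP: "typing K \<Sigma> \<Gamma> r r' e B \<Longrightarrow> e = EMatchP x x1 x2 eb \<Longrightarrow> E x = Some (VPair w1 w2) \<Longrightarrow>
   (\<And>\<Gamma> r r' A. typing K \<Sigma> \<Gamma> r r' eb A \<Longrightarrow> (a - KmatchP K) - a' = r - r' + potE (E(x1 \<mapsto> w1, x2 \<mapsto> w2)) \<Gamma> - pot v A) \<Longrightarrow>
   a - a' = r - r' + potE E \<Gamma> - pot v B"
proof (induction rule: typing.induct)
  case (T_weak K \<Sigma> \<Gamma> q q' e B A x)
  show ?case using T_weak.IH[OF T_weak.prems] potE_weak[OF T_weak.hyps(1-3), of E] by (simp add: fun_upd_def)
next
  case (T_relax K \<Sigma> \<Gamma> p p' e A q q')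
  show ?case using T_relax.IH[OF T_relax.prems] T_relax.hyps(3) by simp
next
  case (T_matchP K \<Sigma> \<Gamma> y1 A1 y2 A2 q q' e' A y)
  have f: "finite (dom \<Gamma>)" using typing_finite[OF T_matchP.hyps(1)] by (simp add: fun_upd_def[symmetric])
  have eq: "y = x" "y1 = x1" "y2 = x2" "e' = eb" using T_matchP.prems(1) by simp_all
  have t: "typing K \<Sigma> (\<Gamma>(x1 \<mapsto> A1, x2 \<mapsto> A2)) (q - KmatchP K) q' eb A" using T_matchP.hyps(1) eq by simp
  note h = T_matchP.prems(3)[OF t]
  have "potE (E(x1 \<mapsto> w1, x2 \<mapsto> w2)) (\<Gamma>(x1 \<mapsto> A1, x2 \<mapsto> A2)) = potE (E(x1 \<mapsto> w1, x2 \<mapsto> w2)) \<Gamma> + pot w1 A1 + pot w2 A2"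
    using potE_upd2[OF f] T_matchP.hyps eq T_matchP.prems(2) by simp
  also have "potE (E(x1 \<mapsto> w1, x2 \<mapsto> w2)) \<Gamma> = potE E \<Gamma>"
    using T_matchP.hyps eq by (intro potE_cong) auto
  finally have h2: "potE (E(x1 \<mapsto> w1, x2 \<mapsto> w2)) (\<Gamma>(x1 \<mapsto> A1, x2 \<mapsto> A2)) = potE E \<Gamma> + pot w1 A1 + pot w2 A2" .
  have "potE E (\<Gamma>(y \<mapsto> AProd A1 A2)) = potE E \<Gamma> + pot w1 A1 + pot w2 A2"
    using potE_upd[OF f T_matchP.hyps(5)] eq T_matchP.prems(2) by simp
  then show ?case using h h2 by (simp add: fun_upd_def)
qed (simp only: expr.distinct)+

lemma case_matchN: "typing K \<Sigma> \<Gamma> r r' e B \<Longrightarrow> e = EMatchL x e1 xh xt e2 \<Longrightarrow> E x = Some (VList []) \<Longrightarrow>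
   (\<And>\<Gamma> r r' A. typing K \<Sigma> \<Gamma> r r' e1 A \<Longrightarrow> (a - KmatchN K) - a' = r - r' + potE E \<Gamma> - pot v A) \<Longrightarrow>
   a - a' = r - r' + potE E \<Gamma> - pot v B"
proof (induction rule: typing.induct)
  case (T_weak K \<Sigma> \<Gamma> q q' e B A x)
  show ?case using T_weak.IH[OF T_weak.prems] potE_weak[OF T_weak.hyps(1-3), of E] by (simp add: fun_upd_def)
next
  case (T_relax K \<Sigma> \<Gamma> p p' e A q q')
  show ?case using T_relax.IH[OF T_relax.prems] T_relax.hyps(3) by simp
next
  case (T_matchL K \<Sigma> \<Gamma> q q' e1' B yh A yt p e2' y)
  have f: "finite (dom \<Gamma>)" using typing_finite[OF T_matchL.hyps(1)] .
  have eq: "y = x" "e1' = e1" using T_matchL.prems(1) by simp_all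
  have t: "typing K \<Sigma> \<Gamma> (q - KmatchN K) q' e1 B" using T_matchL.hyps(1) eq by simp
  note h = T_matchL.prems(3)[OF t]
  have "potE E (\<Gamma>(y \<mapsto> AList p A)) = potE E \<Gamma>"
    using potE_upd[OF f T_matchL.hyps(6)] eq T_matchL.prems(2) by simp
  then show ?case using h by (simp add: fun_upd_def)
qed (simp only: expr.distinct)+

lemma case_matchL: "typing K \<Sigma> \<Gamma> r r' e B \<Longrightarrow> e = EMatchL x e1 xh xt e2 \<Longrightarrow> E x = Some (VList (w # ws)) \<Longrightarrow>
   (\<And>\<Gamma> r r' A. typing K \<Sigma> \<Gamma> r r' e2 A \<Longrightarrow> (a - KmatchL K) - a' = r - r' + potE (E(xh \<mapsto> w, xt \<mapsto> VList ws)) \<Gamma> - pot v A) \<Longrightarrow>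
   a - a' = r - r' + potE E \<Gamma> - pot v B"
proof (induction rule: typing.induct)
  case (T_weak K \<Sigma> \<Gamma> q q' e B A x)
  show ?case using T_weak.IH[OF T_weak.prems] potE_weak[OF T_weak.hyps(1-3), of E] by (simp add: fun_upd_def)
next
  case (T_relax K \<Sigma> \<Gamma> p p' e A q q')
  show ?case using T_relax.IH[OF T_relax.prems] T_relax.hyps(3) by simp
next
  case (T_matchL K \<Sigma> \<Gamma> q q' e1' B yh A yt p e2' y)
  have f: "finite (dom \<Gamma>)" using typing_finite[OF T_matchL.hyps(1)] .
  have eq: "y = x" "yh = xh" "yt = xt" "e2' = e2" using T_matchL.prems(1) by simp_all
  have t: "typing K \<Sigma> (\<Gamma>(xh \<mapsto> A, xt \<mapsto> AList p A)) (q + p - KmatchL K) q' e2 B" using T_matchL.hyps(2) eq by simp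
  note h = T_matchL.prems(3)[OF t]
  have "potE (E(xh \<mapsto> w, xt \<mapsto> VList ws)) (\<Gamma>(xh \<mapsto> A, xt \<mapsto> AList p A)) = potE (E(xh \<mapsto> w, xt \<mapsto> VList ws)) \<Gamma> + pot w A + pot (VList ws) (AList p A)"
    using potE_upd2[OF f] T_matchL.hyps eq T_matchL.prems(2) by simp
  also have "potE (E(xh \<mapsto> w, xt \<mapsto> VList ws)) \<Gamma> = potE E \<Gamma>"
    using T_matchL.hyps eq by (intro potE_cong) auto
  finally have h2: "potE (E(xh \<mapsto> w, xt \<mapsto> VList ws)) (\<Gamma>(xh \<mapsto> A, xt \<mapsto> AList p A)) = potE E \<Gamma> + pot w A + pot (VList ws) (AList p A)" .
  have "potE E (\<Gamma>(y \<mapsto> AList p A)) = potE E \<Gamma> + pot (VList (w # ws)) (AList p A)"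
    using potE_upd[OF f T_matchL.hyps(6)] eq T_matchL.prems(2) by simp
  then show ?case using h h2 by (simp add: fun_upd_def algebra_simps)
qed (simp only: expr.distinct)+

lemma case_share: "typing K \<Sigma> \<Gamma> r r' e B \<Longrightarrow> e = EShare x x1 x2 eb \<Longrightarrow> E x = Some w \<Longrightarrow>
   (\<And>\<Gamma> r r' A. typing K \<Sigma> \<Gamma> r r' eb A \<Longrightarrow> a - a' = r - r' + potE ((E(x := None))(x1 \<mapsto> w, x2 \<mapsto> w)) \<Gamma> - pot v A) \<Longrightarrow>
   a - a' = r - r' + potE E \<Gamma> - pot v B"
proof (induction rule: typing.induct)
  case (T_weak K \<Sigma> \<Gamma> q q' e B A x)
  show ?case using T_weak.IH[OF T_weak.prems] potE_weak[OF T_weak.hyps(1-3), of E] by (simp add: fun_upd_def)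
next
  case (T_relax K \<Sigma> \<Gamma> p p' e A q q')
  show ?case using T_relax.IH[OF T_relax.prems] T_relax.hyps(3) by simp
next
  case (T_share K \<Sigma> \<Gamma> y1 A1 y2 A2 q q' e' B A y)
  have f: "finite (dom \<Gamma>)" using typing_finite[OF T_share.hyps(1)] by (simp add: fun_upd_def[symmetric])
  have eq: "y = x" "y1 = x1" "y2 = x2" "e' = eb" using T_share.prems(1) by simp_all
  have t: "typing K \<Sigma> (\<Gamma>(x1 \<mapsto> A1, x2 \<mapsto> A2)) q q' eb B" using T_share.hyps(1) eq by simp
  note h = T_share.prems(3)[OF t]
  have "potE ((E(x := None))(x1 \<mapsto> w, x2 \<mapsto> w)) (\<Gamma>(x1 \<mapsto> A1, x2 \<mapsto> A2)) = potE ((E(x := None))(x1 \<mapsto> w, x2 \<mapsto> w)) \<Gamma> + pot w A1 + pot w A2"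
    using potE_upd2[OF f] T_share.hyps eq T_share.prems(2) by simp
  also have "potE ((E(x := None))(x1 \<mapsto> w, x2 \<mapsto> w)) \<Gamma> = potE E \<Gamma>"
    using T_share.hyps eq by (intro potE_cong) auto
  finally have h2: "potE ((E(x := None))(x1 \<mapsto> w, x2 \<mapsto> w)) (\<Gamma>(x1 \<mapsto> A1, x2 \<mapsto> A2)) = potE E \<Gamma> + pot w A1 + pot w A2" .
  have "potE E (\<Gamma>(y \<mapsto> A)) = potE E \<Gamma> + pot w A"
    using potE_upd[OF f T_share.hyps(6)] eq T_share.prems(2) by simp
  then show ?case using h h2 pot_share[OF T_share.hyps(2), of w] by (simp add: fun_upd_def)
qed (simp only: expr.distinct)+


lemma sound:
  assumes ev: "eval P K E a a' e v"
  shows "well_typed P K \<Sigma> \<Longrightarrow> typing K \<Sigma> \<Gamma> r r' e A \<Longrightarrow> a - a' = r - r' + potE E \<Gamma> - pot v A"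
  using ev
proof (induction arbitrary: \<Gamma> r r' A rule: eval.induct)
  case E_unit then show ?case using case_unit[OF E_unit.prems(2) refl] by simp
next
  case E_true then show ?case using case_true[OF E_true.prems(2) refl] by simp
next
  case E_false then show ?case using case_false[OF E_false.prems(2) refl] by simp
next
  case E_int then show ?case using case_int[OF E_int.prems(2) refl] by simp
next
  case E_nil then show ?case using case_nil[OF E_nil.prems(2) refl] by simp
next
  case (E_var E x w q K P) then show ?case using case_var[where E=E, OF E_var.prems(2) refl E_var.hyps(1)] by simp
next
  case (E_op E x1 w1 x2 w2 bop w q K P) then show ?case using case_op[where E=E, OF E_op.prems(2) refl E_op.hyps(1-3)] by simp
next
  case (E_pair E x1 w1 x2 w2 q K P) then show ?case using case_pair[where E=E, OF E_pair.prems(2) refl E_pair.hyps(1-2)] by simp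
next
  case (E_cons E xh w xt ws q K P) then show ?case using case_cons[where E=E, OF E_cons.prems(2) refl E_cons.hyps(1-2)] by simp
next
  case (E_app P f y ef E x w K q q' v) show ?case by (rule case_app[where P=P and E=E, OF E_app.prems(2) refl E_app.prems(1) E_app.hyps(1,2)]) (rule E_app.IH[OF E_app.prems(1)])
next
  case E_let show ?case by (rule case_let[OF E_let.prems(2) refl ]) (rule E_let.IH(1)[OF E_let.prems(1)], assumption, rule E_let.IH(2)[OF E_let.prems(1)])
next
  case E_if_true show ?case by (rule case_if[OF E_if_true.prems(2) refl disjI1[OF refl]]) (rule E_if_true.IH[OF E_if_true.prems(1)])
next
  case E_if_false show ?case by (rule case_if[OF E_if_false.prems(2) refl disjI2[OF refl]]) (rule E_if_false.IH[OF E_if_false.prems(1)])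
next
  case (E_matchP E x w1 w2 P K x1 x2 q q' e v) show ?case by (rule case_matchP[where E=E, OF E_matchP.prems(2) refl E_matchP.hyps(1)]) (rule E_matchP.IH[OF E_matchP.prems(1)])
next
  case (E_matchN E x P K q q' e1 v xh xt e2) show ?case by (rule case_matchN[where E=E, OF E_matchN.prems(2) refl E_matchN.hyps(1)]) (rule E_matchN.IH[OF E_matchN.prems(1)])
next
  case (E_matchL E x w ws P K xh xt q q' e2 v e1) show ?case by (rule case_matchL[where E=E, OF E_matchL.prems(2) refl E_matchL.hyps(1)]) (rule E_matchL.IH[OF E_matchL.prems(1)])
next
  case (E_share E x w P K x1 x2 q q' e v) show ?case by (rule case_share[where E=E, OF E_share.prems(2) refl E_share.hyps(1)]) (rule E_share.IH[OF E_share.prems(1)])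
qed

theorem theorem3:
  fixes P :: prog and K :: costs and \<Sigma> :: sig and \<Gamma> :: actx and X :: "var set"
    and E :: env and e :: expr and v :: val and q q' :: rat and A :: aty
  assumes "well_typed P K \<Sigma>"
    and "finite (dom \<Gamma>)"
    and "X \<subseteq> dom \<Gamma>"
    and "env_wf E (erase_ctx \<Gamma>)"
    and "\<exists>p p'. eval P K E p p' e v"
    and "typing K \<Sigma> \<Gamma> q q' e A"
    and "share_rel A A A"
    and "\<forall>x \<in> dom \<Gamma> - X. share_rel (the (\<Gamma> x)) (the (\<Gamma> x)) (the (\<Gamma> x))"
  shows "const_res P K (erase_ctx \<Gamma>) X e"
  unfolding const_res_def
proof (intro allI impI)
  fix E1 E2 p1 p1' v1 p2 p2' v2
  assume s: "env_size_eq X E1 E2" and ev1: "eval P K E1 p1 p1' e v1" and ev2: "eval P K E2 p2 p2' e v2"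
  have h1: "p1 - p1' = q - q' + potE E1 \<Gamma>"
    using sound[OF ev1 assms(1) assms(6)] pot_zero[OF assms(7)] by simp
  have h2: "p2 - p2' = q - q' + potE E2 \<Gamma>"
    using sound[OF ev2 assms(1) assms(6)] pot_zero[OF assms(7)] by simp
  have "potE E1 \<Gamma> = potE E2 \<Gamma>"
    unfolding potE_def
  proof (rule sum.cong[OF refl])
    fix x assume x: "x \<in> dom \<Gamma>"
    show "pot (the (E1 x)) (the (\<Gamma> x)) = pot (the (E2 x)) (the (\<Gamma> x))"
    proof (cases "x \<in> X")
      case True
      then show ?thesis using s size_eq_pot unfolding env_size_eq_def by blast
    next
      case False
      then show ?thesis using assms(8) x pot_zero by simp
    qed
  qed
  then show "p1 - p1' = p2 - p2'" using h1 h2 by simp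
qed

end
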